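(* Let $G$ be a finite simple graph with edge weight function $w$ and vertex weight function $w_1$, let $\theta$ be a real number and let $u\in V(G)$. If $u$ is $(\theta,w,w_1)$-special, then $u$ is $(\theta,w,w_1)$-positive.
   Context: An edge weight function $w$ assigns a nonzero complex number to each edge; a vertex weight function $w_1$ assigns a real number (possibly $0$) to each vertex; subgraphs carry restricted weights; $G\setminus u$ deletes $u$ and its incident edges. For $A\subseteq E(G)$, $w(A)=\prod_{e\in A}w(e)$. $\mu_w(G,x)=\sum_{M}(-1)^{|M|}|w(M)|^2x^{n-2|M|}$ over all matchings $M$ (including empty). $\eta_{(w,w_1)}(G,x)=\sum_{S\subseteq V(G)}(-1)^{|V(G)\setminus S|}\big(\prod_{y\in V(G)\setminus S}w_1(y)\big)\mu_w(G[S],x)$ with $G[S]$ the induced subgraph; $\mu_w,\eta_{(w,w_1)}$ of the empty graph equal $1$. $\mathrm{mult}(\theta,H)$ is the multiplicity of $\theta$ as a root of $\eta_{(w,w_1)}(H,x)$ ($0$ if not a root). A vertex $v$ of $H$ is $(\theta,w,w_1)$-essential if $\mathrm{mult}(\theta,H\setminus v)=\mathrm{mult}(\theta,H)-1$ and $(\theta,w,w_1)$-positive if $\mathrm{mult}(\theta,H\setminus v)=\mathrm{mult}(\theta,H)+1$; $v$ is $(\theta,w,w_1)$-special if it is not essential but is adjacent to some essential vertex. *)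

theory Defs
  imports Complex_Main "HOL-Computational_Algebra.Polynomial"
begin

definition simple_graph :: "'a set \<Rightarrow> 'a set set \<Rightarrow> bool" where
  "simple_graph V E \<longleftrightarrow> finite V \<and> (\<forall>e\<in>E. \<exists>a b. a \<noteq> b \<and> a \<in> V \<and> b \<in> V \<and> e = {a, b})"

definition matchings :: "'a set set \<Rightarrow> 'a set set set" where
  "matchings E = {M. M \<subseteq> E \<and> (\<forall>e\<in>M. \<forall>f\<in>M. e \<noteq> f \<longrightarrow> e \<inter> f = {})}"

definition induced_edges :: "'a set set \<Rightarrow> 'a set \<Rightarrow> 'a set set" where
  "induced_edges E S = {e \<in> E. e \<subseteq> S}"

definition mu_poly :: "'a set \<Rightarrow> 'a set set \<Rightarrow> ('a set \<Rightarrow> complex) \<Rightarrow> real poly" where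
  "mu_poly V E w = (\<Sum>M\<in>matchings E.
      smult ((-1) ^ card M * (cmod (\<Prod>e\<in>M. w e))\<^sup>2) (monom 1 (card V - 2 * card M)))"

definition eta_poly :: "'a set \<Rightarrow> 'a set set \<Rightarrow> ('a set \<Rightarrow> complex) \<Rightarrow> ('a \<Rightarrow> real) \<Rightarrow> real poly" where
  "eta_poly V E w w1 = (\<Sum>S\<in>Pow V.
      smult ((-1) ^ card (V - S) * (\<Prod>y\<in>V - S. w1 y)) (mu_poly S (induced_edges E S) w))"

definition mult :: "real \<Rightarrow> 'a set \<Rightarrow> 'a set set \<Rightarrow> ('a set \<Rightarrow> complex) \<Rightarrow> ('a \<Rightarrow> real) \<Rightarrow> nat" where
  "mult \<theta> V E w w1 = order \<theta> (eta_poly V E w w1)"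

definition del_edges :: "'a set set \<Rightarrow> 'a \<Rightarrow> 'a set set" where
  "del_edges E v = {e \<in> E. v \<notin> e}"

definition essential :: "real \<Rightarrow> 'a set \<Rightarrow> 'a set set \<Rightarrow> ('a set \<Rightarrow> complex) \<Rightarrow> ('a \<Rightarrow> real) \<Rightarrow> 'a \<Rightarrow> bool" where
  "essential \<theta> V E w w1 v \<longleftrightarrow> v \<in> V \<and>
     int (mult \<theta> (V - {v}) (del_edges E v) w w1) = int (mult \<theta> V E w w1) - 1"

definition positive :: "real \<Rightarrow> 'a set \<Rightarrow> 'a set set \<Rightarrow> ('a set \<Rightarrow> complex) \<Rightarrow> ('a \<Rightarrow> real) \<Rightarrow> 'a \<Rightarrow> bool" where
  "positive \<theta> V E w w1 v \<longleftrightarrow> v \<in> V \<and>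
     mult \<theta> (V - {v}) (del_edges E v) w w1 = mult \<theta> V E w w1 + 1"

definition special :: "real \<Rightarrow> 'a set \<Rightarrow> 'a set set \<Rightarrow> ('a set \<Rightarrow> complex) \<Rightarrow> ('a \<Rightarrow> real) \<Rightarrow> 'a \<Rightarrow> bool" where
  "special \<theta> V E w w1 u \<longleftrightarrow> u \<in> V \<and> \<not> essential \<theta> V E w w1 u \<and>
     (\<exists>v. {u, v} \<in> E \<and> essential \<theta> V E w w1 v)"

end

theory Submission
  imports Defs
begin


definition nice :: "real \<Rightarrow> real poly \<Rightarrow> bool" where
  "nice t p \<longleftrightarrow> p = 0 \<or> (\<exists>k r. p = [:-t,1:]^(2*k) * r \<and> poly r t > 0)"

lemma nice_0[simp]: "nice t 0" by (simp add: nice_def)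

lemma nice_add_aux: assumes kl: "k \<le> l" and r: "poly r t > 0" and s: "poly s t > 0"
  shows "nice t ([:-t,1:]^(2*k) * r + [:-t,1:]^(2*l) * s)"
proof -
  have "[:-t,1:]^(2*k) * r + [:-t,1:]^(2*l) * s = [:-t,1:]^(2*k) * (r + [:-t,1:]^(2*(l-k)) * s)"
    using kl by (simp add: algebra_simps flip: power_add)
  moreover have "poly (r + [:-t,1:]^(2*(l-k)) * s) t > 0"
    using r s kl by (cases "l = k") (auto simp: zero_power)
  ultimately show ?thesis unfolding nice_def by metis
qed

lemma nice_add: assumes "nice t p" "nice t q" shows "nice t (p+q)"
proof (cases "p = 0 \<or> q = 0")
  case True then show ?thesis using assms by auto
next
  case False
  then obtain k r l s where h: "p = [:-t,1:]^(2*k) * r" "poly r t > 0"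
    "q = [:-t,1:]^(2*l) * s" "poly s t > 0" using assms unfolding nice_def by blast
  show ?thesis
  proof (cases "k \<le> l")
    case True then show ?thesis using nice_add_aux[OF True h(2,4)] h by simp
  next
    case False then have "l \<le> k" by simp
    from nice_add_aux[OF this h(4,2)] show ?thesis using h by (simp add: add.commute)
  qed
qed

lemma nice_smult: assumes "nice t p" "c \<ge> 0" shows "nice t (smult c p)"
proof (cases "c = 0")
  case False
  then show ?thesis using assms unfolding nice_def
    by (auto intro!: exI[of _ "smult c r" for r])
qed simp

lemma nice_sum: "(\<And>i. i \<in> A \<Longrightarrow> nice t (f i)) \<Longrightarrow> nice t (sum f A)"
  by (induction A rule: infinite_finite_induct) (auto intro: nice_add)

lemma nice_sq: "nice t (q^2)"
proof (cases "q = 0")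
  case False
  obtain s where s: "q = [:-t,1:]^order t q * s" "\<not> [:-t,1:] dvd s"
    using order_decomp[OF False] by blast
  have "poly s t \<noteq> 0" using s(2) poly_eq_0_iff_dvd by blast
  hence "poly (s^2) t > 0" by simp
  moreover have "q^2 = [:-t,1:]^(2*order t q) * s^2"
    by (subst s(1)) (simp add: power_mult_distrib mult.commute flip: power_mult)
  ultimately show ?thesis unfolding nice_def by blast
qed (simp add: nice_def)

lemma order_Xr: assumes "poly r t \<noteq> 0" shows "order t ([:-t,1:]^n * r) = n"
proof -
  have "r \<noteq> 0" using assms by auto
  hence "[:-t,1:]^n * r \<noteq> 0" by simp
  thus ?thesis using assms by (simp add: order_mult order_power_n_n order_root)
qed

lemma nice_order_even: assumes "nice t p" "p \<noteq> 0" shows "even (order t p)"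
  using assms unfolding nice_def by (auto simp: order_Xr)

lemma nice_add_le: assumes "nice t p" "nice t q" "q \<noteq> 0"
  shows "p + q \<noteq> 0 \<and> order t (p+q) \<le> order t q"
proof (cases "p = 0")
  case False
  from assms False obtain k r l s where p: "p = [:-t,1:]^(2*k) * r" "poly r t > 0"
      and q: "q = [:-t,1:]^(2*l) * s" "poly s t > 0" unfolding nice_def by blast
  define m where "m = min k l"
  have "p + q = [:-t,1:]^(2*m) * ([:-t,1:]^(2*(k-m)) * r + [:-t,1:]^(2*(l-m)) * s)"
    by (simp add: p q m_def algebra_simps flip: power_add)
  moreover have pos: "poly ([:-t,1:]^(2*(k-m)) * r + [:-t,1:]^(2*(l-m)) * s) t > 0"
    using p q unfolding m_def by (cases "k \<le> l") (auto simp: zero_power add_pos_nonneg add_nonneg_pos)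
  ultimately have "order t (p+q) = 2*m" "p + q \<noteq> 0"
    using order_Xr[of _ t "2*m"] by (auto simp del: poly_mult poly_add)
  moreover have "order t q = 2*l" using q order_Xr by (metis less_irrefl)
  ultimately show ?thesis by (simp add: m_def)
qed (use assms in simp)




definition sM :: "('a set \<Rightarrow> complex) \<Rightarrow> 'a set set \<Rightarrow> real" where
  "sM w M = (-1)^card M * (cmod (\<Prod>e\<in>M. w e))\<^sup>2"

definition eta2 :: "'a set \<Rightarrow> 'a set set \<Rightarrow> ('a set \<Rightarrow> complex) \<Rightarrow> ('a \<Rightarrow> real) \<Rightarrow> real poly" where
  "eta2 V E w w1 = (\<Sum>M\<in>matchings E. smult (sM w M) (\<Prod>y\<in>V - \<Union>M. [:-w1 y, 1:]))"

definition twosets :: "'a set set \<Rightarrow> bool" where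
  "twosets E \<longleftrightarrow> (\<forall>e\<in>E. \<exists>a b. a \<noteq> b \<and> e = {a,b})"

lemma smult_sum_right: "smult c (sum f A) = (\<Sum>x\<in>A. smult c (f x))"
  by (induction A rule: infinite_finite_induct) (auto simp: smult_add_right)

lemma pderiv_sum: "pderiv (sum f A) = (\<Sum>x\<in>A. pderiv (f x))"
  by (induction A rule: infinite_finite_induct) (auto simp: pderiv_add)

lemma matchings_induced: "matchings (induced_edges E S) = {M \<in> matchings E. \<Union>M \<subseteq> S}"
  unfolding matchings_def induced_edges_def by auto

lemma finite_matchings: "finite E \<Longrightarrow> finite (matchings E)"
  unfolding matchings_def by (rule finite_subset[of _ "Pow E"]) auto

lemma card_Union_matching:
  assumes "twosets E" "M \<in> matchings E" "finite E"
  shows "card (\<Union>M) = 2 * card M"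
proof -
  have M: "M \<subseteq> E" "\<And>e f. e \<in> M \<Longrightarrow> f \<in> M \<Longrightarrow> e \<noteq> f \<Longrightarrow> e \<inter> f = {}"
    using assms(2) unfolding matchings_def by auto
  have c2: "\<And>e. e \<in> M \<Longrightarrow> card e = 2" using M(1) assms(1) unfolding twosets_def by fastforce
  have "card (\<Union>M) = sum card M"
    by (rule card_Union_disjoint) (use M c2 in \<open>auto simp: pairwise_def disjnt_def intro: card_ge_0_finite\<close>)
  also have "\<dots> = sum (\<lambda>_. 2) M" using c2 by simp
  finally show ?thesis by simp
qed

lemma prod_lin_expand:
  fixes A :: "'a set" and a :: "'a \<Rightarrow> real"
  assumes "finite A"
  shows "(\<Prod>y\<in>A. [:-a y, 1:]) =
    (\<Sum>T\<in>Pow A. smult ((-1)^card (A-T) * (\<Prod>y\<in>A-T. a y)) (monom 1 (card T)))"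
proof -
  have "(\<Prod>y\<in>A. [:-a y, 1:]) = (\<Prod>y\<in>A. monom 1 1 + [:-a y:])"
    by (intro prod.cong refl) (simp add: monom_Suc one_pCons)
  also have "\<dots> = (\<Sum>T\<in>Pow A. (\<Prod>y\<in>T. monom 1 1) * (\<Prod>y\<in>A-T. [:-a y:]))"
    by (rule prod_add[OF assms])
  also have "\<dots> = (\<Sum>T\<in>Pow A. smult ((-1)^card (A-T) * (\<Prod>y\<in>A-T. a y)) (monom 1 (card T)))"
  proof (rule sum.cong[OF refl])
    fix T :: "'a set"
    have c: "(\<Prod>y\<in>B. [:f y:]) = [:\<Prod>y\<in>B. f y:]" for B and f :: "'a \<Rightarrow> real"
      by (induction B rule: infinite_finite_induct) auto
    have m: "(\<Prod>y\<in>T. monom (1::real) 1) = monom 1 (card T)"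
      by (simp add: monom_power)
    show "(\<Prod>y\<in>T. monom 1 1) * (\<Prod>y\<in>A-T. [:-a y:]) = smult ((-1)^card (A-T) * (\<Prod>y\<in>A-T. a y)) (monom 1 (card T))"
      unfolding m c by (simp add: prod_uminus)
  qed
  finally show ?thesis .
qed

lemma inner_sum:
  fixes U V :: "'a set" and w1 :: "'a \<Rightarrow> real"
  assumes "finite V" "U \<subseteq> V"
  shows "(\<Sum>S\<in>{S\<in>Pow V. U \<subseteq> S}. smult ((-1) ^ card (V - S) * (\<Prod>y\<in>V - S. w1 y)) (monom 1 (card S - card U)))
       = (\<Prod>y\<in>V - U. [:-w1 y, 1:])"
proof -
  have fU: "finite U" using assms finite_subset by blast
  have img: "{S\<in>Pow V. U \<subseteq> S} = (\<lambda>T. U \<union> T) ` Pow (V - U)"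
  proof
    show "{S \<in> Pow V. U \<subseteq> S} \<subseteq> (\<union>) U ` Pow (V - U)"
    proof
      fix S assume "S \<in> {S \<in> Pow V. U \<subseteq> S}"
      then have "S = U \<union> (S - U)" "S - U \<in> Pow (V - U)" by auto
      then show "S \<in> (\<union>) U ` Pow (V - U)" by blast
    qed
  qed (use assms in auto)
  have inj: "inj_on (\<lambda>T. U \<union> T) (Pow (V - U))"
    by (rule inj_onI) auto
  have "(\<Sum>S\<in>{S\<in>Pow V. U \<subseteq> S}. smult ((-1) ^ card (V - S) * (\<Prod>y\<in>V - S. w1 y)) (monom 1 (card S - card U)))
     = (\<Sum>T\<in>Pow (V-U). smult ((-1) ^ card (V - (U \<union> T)) * (\<Prod>y\<in>V - (U \<union> T). w1 y)) (monom 1 (card (U \<union> T) - card U)))"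
    unfolding img by (subst sum.reindex[OF inj]) simp
  also have "\<dots> = (\<Sum>T\<in>Pow (V-U). smult ((-1)^card ((V-U)-T) * (\<Prod>y\<in>(V-U)-T. w1 y)) (monom 1 (card T)))"
  proof (rule sum.cong[OF refl])
    fix T assume T: "T \<in> Pow (V - U)"
    have "V - (U \<union> T) = (V - U) - T" by auto
    moreover have "card (U \<union> T) = card U + card T"
      using T fU assms(1) by (subst card_Un_disjoint) (auto intro: finite_subset)
    ultimately show "smult ((-1) ^ card (V - (U \<union> T)) * (\<Prod>y\<in>V - (U \<union> T). w1 y)) (monom 1 (card (U \<union> T) - card U))
       = smult ((-1)^card ((V-U)-T) * (\<Prod>y\<in>(V-U)-T. w1 y)) (monom 1 (card T))" by simp
  qed
  also have "\<dots> = (\<Prod>y\<in>V - U. [:-w1 y, 1:])"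
    by (rule prod_lin_expand[symmetric]) (use assms in auto)
  finally show ?thesis .
qed

lemma eta_eq:
  assumes fin: "finite V" and tw: "twosets E" and sub: "\<forall>e\<in>E. e \<subseteq> V"
  shows "eta_poly V E w w1 = eta2 V E w w1"
proof -
  have fE: "finite E" using sub fin by (meson PowI finite_Pow_iff finite_subset subsetI)
  have fM: "finite (matchings E)" using fE finite_matchings by blast
  have "eta_poly V E w w1 = (\<Sum>S\<in>Pow V. \<Sum>M\<in>{M \<in> matchings E. \<Union>M \<subseteq> S}.
      smult ((-1) ^ card (V - S) * (\<Prod>y\<in>V - S. w1 y)) (smult (sM w M) (monom 1 (card S - 2 * card M))))"
    unfolding eta_poly_def mu_poly_def matchings_induced sM_def smult_sum_right ..
  also have "\<dots> = (\<Sum>M\<in>matchings E. \<Sum>S\<in>{S \<in> Pow V. \<Union>M \<subseteq> S}.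
      smult ((-1) ^ card (V - S) * (\<Prod>y\<in>V - S. w1 y)) (smult (sM w M) (monom 1 (card S - 2 * card M))))"
    by (rule sum.swap_restrict) (use fin fM in auto)
  also have "\<dots> = eta2 V E w w1"
    unfolding eta2_def
  proof (rule sum.cong[OF refl])
    fix M assume M: "M \<in> matchings E"
    have U: "\<Union>M \<subseteq> V" using M sub unfolding matchings_def by auto
    have c: "2 * card M = card (\<Union>M)" using card_Union_matching[OF tw M fE] by simp
    show "(\<Sum>S\<in>{S \<in> Pow V. \<Union>M \<subseteq> S}.
      smult ((-1) ^ card (V - S) * (\<Prod>y\<in>V - S. w1 y)) (smult (sM w M) (monom 1 (card S - 2 * card M))))
      = smult (sM w M) (\<Prod>y\<in>V - \<Union>M. [:-w1 y, 1:])"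
      unfolding c inner_sum[OF fin U, symmetric] smult_sum_right
      by (intro sum.cong refl) (simp add: mult.commute)
  qed
  finally show ?thesis .
qed




lemma twosets_del: "twosets E \<Longrightarrow> twosets (del_edges E u)"
  unfolding twosets_def del_edges_def by auto

lemma matchings_del: "matchings (del_edges E u) = {M \<in> matchings E. u \<notin> \<Union>M}"
  unfolding matchings_def del_edges_def by auto

lemma eta2_rec:
  assumes fin: "finite V" and tw: "twosets E" and sub: "\<forall>e\<in>E. e \<subseteq> V" and u: "u \<in> V"
  shows "eta2 V E w w1 = [:-w1 u, 1:] * eta2 (V - {u}) (del_edges E u) w w1
     - (\<Sum>z\<in>{z. {u,z} \<in> E}. smult ((cmod (w {u,z}))\<^sup>2) (eta2 (V - {u} - {z}) (del_edges (del_edges E u) z) w w1))"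
proof -
  have fE: "finite E" using sub fin by (meson PowI finite_Pow_iff finite_subset subsetI)
  have fM: "finite (matchings E)" using fE finite_matchings by blast
  define f where "f M = smult (sM w M) (\<Prod>y\<in>V - \<Union>M. [:-w1 y, 1:])" for M
  define A where "A = matchings (del_edges E u)"
  define B where "B = {M \<in> matchings E. u \<in> \<Union>M}"
  define N where "N = {z. {u,z} \<in> E}"
  have N: "\<And>z. z \<in> N \<Longrightarrow> z \<in> V \<and> z \<noteq> u"
  proof -
    fix z assume "z \<in> N"
    then have e: "{u,z} \<in> E" by (simp add: N_def)
    then obtain a b where "a \<noteq> b" "{u,z} = {a,b}" using tw unfolding twosets_def by blast
    then have "z \<noteq> u" by (metis doubleton_eq_iff)
    then show "z \<in> V \<and> z \<noteq> u" using e sub by auto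
  qed
  have fN: "finite N" using N fin by (meson finite_subset subsetI)
  have split: "matchings E = A \<union> B" "A \<inter> B = {}" unfolding A_def B_def matchings_del by auto
  have fA: "finite A" "finite B" using fM split by auto
  have eta_split: "eta2 V E w w1 = sum f A + sum f B"
    unfolding eta2_def f_def[symmetric] split(1) by (rule sum.union_disjoint) (use fA split in auto)
  have partA: "sum f A = [:-w1 u, 1:] * eta2 (V - {u}) (del_edges E u) w w1"
    unfolding eta2_def sum_distrib_left A_def[symmetric]
  proof (rule sum.cong[OF refl])
    fix M assume "M \<in> A"
    then have "u \<notin> \<Union>M" unfolding A_def matchings_del by auto
    then have "V - \<Union>M = insert u ((V - {u}) - \<Union>M)" using u by auto
    then have "(\<Prod>y\<in>V - \<Union>M. [:-w1 y, 1:]) = [:-w1 u, 1:] * (\<Prod>y\<in>(V - {u}) - \<Union>M. [:-w1 y, 1:])"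
      using fin by simp
    then show "f M = [:-w1 u, 1:] * smult (sM w M) (\<Prod>y\<in>V - {u} - \<Union>M. [:-w1 y, 1:])"
      unfolding f_def by (simp add: mult_smult_right)
  qed
  define Sig where "Sig = (SIGMA z:N. matchings (del_edges (del_edges E u) z))"
  define h where "h = (\<lambda>(z, M'). insert {u,z} M')"
  have avoid: "\<And>z M'. (z, M') \<in> Sig \<Longrightarrow> (\<forall>e\<in>M'. u \<notin> e \<and> z \<notin> e \<and> e \<in> E) \<and> M' \<in> matchings E"
    unfolding Sig_def matchings_def del_edges_def by auto
  have inj: "inj_on h Sig"
  proof (rule inj_onI)
    fix x y assume x: "x \<in> Sig" and y: "y \<in> Sig" and hxy: "h x = h y"
    obtain z M' where xx: "x = (z, M')" by (cases x)
    obtain z' M'' where yy: "y = (z', M'')" by (cases y)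
    have a1: "\<forall>e\<in>M'. u \<notin> e" "\<forall>e\<in>M''. u \<notin> e" using avoid x y xx yy by auto
    have eq: "insert {u,z} M' = insert {u,z'} M''" using hxy xx yy h_def by simp
    then have "{u,z} = {u,z'}" using a1 by (metis insertCI insertE)
    then have zz: "z = z'" by (metis doubleton_eq_iff)
    have "{u,z} \<notin> M'" "{u,z} \<notin> M''" using a1 by auto
    then have "M' = M''" using eq zz by (metis insert_ident)
    then show "x = y" using xx yy zz by simp
  qed
  have img: "B = h ` Sig"
  proof
    show "h ` Sig \<subseteq> B"
    proof
      fix M assume "M \<in> h ` Sig"
      then obtain z M' where zM: "(z, M') \<in> Sig" "M = insert {u,z} M'" unfolding h_def by auto
      have zN: "z \<in> N" using zM Sig_def by auto
      have "M \<in> matchings E" using avoid[OF zM(1)] zN unfolding zM(2) matchings_def N_def by auto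
      then show "M \<in> B" unfolding B_def zM(2) by auto
    qed
  next
    show "B \<subseteq> h ` Sig"
    proof
      fix M assume "M \<in> B"
      then obtain e where e: "e \<in> M" "u \<in> e" and M: "M \<in> matchings E" unfolding B_def by auto
      have eE: "e \<in> E" using M e unfolding matchings_def by auto
      then obtain a b where ab: "a \<noteq> b" "e = {a,b}" using tw unfolding twosets_def by blast
      then obtain z where z: "e = {u,z}" using e(2) by auto
      have zN: "z \<in> N" using z eE N_def by auto
      have disj: "\<And>f. f \<in> M - {e} \<Longrightarrow> f \<inter> e = {}" using M e(1) unfolding matchings_def by blast
      have "M - {e} \<in> matchings (del_edges (del_edges E u) z)"
        using M disj z unfolding matchings_def del_edges_def by auto
      then have "(z, M - {e}) \<in> Sig" using zN Sig_def by auto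
      moreover have "M = h (z, M - {e})" using e(1) z h_def by auto
      ultimately show "M \<in> h ` Sig" by blast
    qed
  qed
  have partB: "sum f B = - (\<Sum>z\<in>N. smult ((cmod (w {u,z}))\<^sup>2) (eta2 (V - {u} - {z}) (del_edges (del_edges E u) z) w w1))"
  proof -
    have "sum f B = sum (f \<circ> h) Sig" unfolding img by (rule sum.reindex[OF inj])
    also have "\<dots> = (\<Sum>z\<in>N. \<Sum>M'\<in>matchings (del_edges (del_edges E u) z). f (insert {u,z} M'))"
    proof -
      have fe: "\<forall>z\<in>N. finite (matchings (del_edges (del_edges E u) z))"
        using fE by (auto intro!: finite_matchings simp: del_edges_def)
      have "(\<Sum>z\<in>N. \<Sum>M'\<in>matchings (del_edges (del_edges E u) z). f (insert {u,z} M'))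
         = (\<Sum>x\<in>Sig. f (insert {u, fst x} (snd x)))"
        unfolding Sig_def by (subst sum.Sigma[OF fN fe]) (simp add: split_def)
      moreover have "sum (f \<circ> h) Sig = (\<Sum>x\<in>Sig. f (insert {u, fst x} (snd x)))"
        unfolding h_def by (simp add: split_def)
      ultimately show ?thesis by simp
    qed
    also have "\<dots> = (\<Sum>z\<in>N. - smult ((cmod (w {u,z}))\<^sup>2) (eta2 (V - {u} - {z}) (del_edges (del_edges E u) z) w w1))"
    proof (rule sum.cong[OF refl])
      fix z assume zN: "z \<in> N"
      show "(\<Sum>M'\<in>matchings (del_edges (del_edges E u) z). f (insert {u,z} M')) =
         - smult ((cmod (w {u,z}))\<^sup>2) (eta2 (V - {u} - {z}) (del_edges (del_edges E u) z) w w1)"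
        unfolding eta2_def smult_sum_right sum_negf[symmetric]
      proof (rule sum.cong[OF refl])
        fix M' assume M': "M' \<in> matchings (del_edges (del_edges E u) z)"
        then have zM: "(z, M') \<in> Sig" using zN Sig_def by auto
        have nin: "{u,z} \<notin> M'" using avoid[OF zM] by auto
        have "M' \<subseteq> E" using avoid[OF zM] by auto
        then have fM': "finite M'" using fE finite_subset by auto
        have s: "sM w (insert {u,z} M') = - ((cmod (w {u,z}))\<^sup>2 * sM w M')"
          proof -
          have "(\<Prod>e\<in>insert {u,z} M'. w e) = w {u,z} * (\<Prod>e\<in>M'. w e)" using nin fM' by simp
          moreover have "card (insert {u,z} M') = Suc (card M')" using nin fM' by simp
          ultimately show ?thesis unfolding sM_def by (simp add: norm_mult power_mult_distrib)
        qed
        have d: "V - \<Union>(insert {u,z} M') = V - {u} - {z} - \<Union>M'" by auto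
        show "f (insert {u,z} M') = - smult ((cmod (w {u,z}))\<^sup>2)
              (smult (sM w M') (\<Prod>y\<in>V - {u} - {z} - \<Union>M'. [:-w1 y, 1:]))"
          unfolding f_def s d by simp
      qed
    qed
    also have "\<dots> = - (\<Sum>z\<in>N. smult ((cmod (w {u,z}))\<^sup>2) (eta2 (V - {u} - {z}) (del_edges (del_edges E u) z) w w1))"
      by (simp add: sum_negf)
    finally show ?thesis unfolding N_def .
  qed
  show ?thesis unfolding eta_split partA partB N_def by simp
qed




lemma pderiv_prod_lin: "pderiv (\<Prod>y\<in>A. [:-a y, 1::real:]) = (\<Sum>z\<in>A. \<Prod>y\<in>A-{z}. [:-a y, 1:])"
  by (simp add: pderiv_prod pderiv_pCons)

lemma eta2_pderiv:
  assumes fin: "finite V" and sub: "\<forall>e\<in>E. e \<subseteq> V"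
  shows "pderiv (eta2 V E w w1) = (\<Sum>z\<in>V. eta2 (V - {z}) (del_edges E z) w w1)"
proof -
  have fE: "finite E" using sub fin by (meson PowI finite_Pow_iff finite_subset subsetI)
  have fM: "finite (matchings E)" using fE finite_matchings by blast
  have "pderiv (eta2 V E w w1) = (\<Sum>M\<in>matchings E. \<Sum>z\<in>{z\<in>V. z \<notin> \<Union>M}.
       smult (sM w M) (\<Prod>y\<in>(V - {z}) - \<Union>M. [:-w1 y, 1:]))"
    unfolding eta2_def pderiv_sum
  proof (rule sum.cong[OF refl])
    fix M
    have e1: "V - \<Union>M = {z\<in>V. z \<notin> \<Union>M}" by auto
    have e2: "\<And>z. V - \<Union>M - {z} = V - {z} - \<Union>M" by auto
    show "pderiv (smult (sM w M) (\<Prod>y\<in>V - \<Union>M. [:- w1 y, 1:])) =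
         (\<Sum>z\<in>{z \<in> V. z \<notin> \<Union>M}. smult (sM w M) (\<Prod>y\<in>V - {z} - \<Union>M. [:- w1 y, 1:]))"
      unfolding pderiv_smult pderiv_prod_lin smult_sum_right e2 e1[symmetric] ..
  qed
  also have "\<dots> = (\<Sum>z\<in>V. \<Sum>M\<in>{M\<in>matchings E. z \<notin> \<Union>M}.
       smult (sM w M) (\<Prod>y\<in>(V - {z}) - \<Union>M. [:-w1 y, 1:]))"
    by (rule sum.swap_restrict[symmetric]) (use fin fM in auto)
  also have "\<dots> = (\<Sum>z\<in>V. eta2 (V - {z}) (del_edges E z) w w1)"
    unfolding eta2_def matchings_del ..
  finally show ?thesis .
qed

lemma eta2_coeff:
  assumes fin: "finite V" and tw: "twosets E" and sub: "\<forall>e\<in>E. e \<subseteq> V"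
  shows "coeff (eta2 V E w w1) (card V) = 1"
proof -
  have fE: "finite E" using sub fin by (meson PowI finite_Pow_iff finite_subset subsetI)
  have fM: "finite (matchings E)" using fE finite_matchings by blast
  have deg: "degree (\<Prod>y\<in>A. [:-w1 y, 1::real:]) = card A" and lc: "coeff (\<Prod>y\<in>A. [:-w1 y, 1::real:]) (card A) = 1"
    if "finite A" for A
  proof -
    have "degree (\<Prod>y\<in>A. [:-w1 y, 1::real:]) = (\<Sum>y\<in>A. degree [:-w1 y, 1::real:])"
      by (rule degree_prod_eq_sum_degree) auto
    then show d: "degree (\<Prod>y\<in>A. [:-w1 y, 1::real:]) = card A" by simp
    have "lead_coeff (\<Prod>y\<in>A. [:-w1 y, 1::real:]) = 1" by (simp add: lead_coeff_prod)
    then show "coeff (\<Prod>y\<in>A. [:-w1 y, 1::real:]) (card A) = 1" using d by simp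
  qed
  have e0: "{} \<in> matchings E" unfolding matchings_def by auto
  have z: "coeff (smult (sM w M) (\<Prod>y\<in>V - \<Union>M. [:-w1 y, 1:])) (card V) = 0"
    if M: "M \<in> matchings E - {{}}" for M
  proof -
    obtain e where e: "e \<in> M" using M by auto
    then have "e \<in> E" using M unfolding matchings_def by auto
    then obtain a b where "e = {a,b}" using tw unfolding twosets_def by blast
    then have "a \<in> \<Union>M" "a \<in> V" using e sub \<open>e \<in> E\<close> by auto
    then have "V - \<Union>M \<subset> V" by blast
    then have "card (V - \<Union>M) < card V" using fin by (rule psubset_card_mono[rotated])
    then show ?thesis using deg[of "V - \<Union>M"] fin by (simp add: coeff_eq_0)
  qed
  have "coeff (eta2 V E w w1) (card V) = (\<Sum>M\<in>matchings E. coeff (smult (sM w M) (\<Prod>y\<in>V - \<Union>M. [:-w1 y, 1:])) (card V))"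
    unfolding eta2_def coeff_sum ..
  also have "\<dots> = coeff (smult (sM w {}) (\<Prod>y\<in>V - \<Union>{}. [:-w1 y, 1:])) (card V)"
  proof -
    have "(\<Sum>M\<in>matchings E - {{}}. coeff (smult (sM w M) (\<Prod>y\<in>V - \<Union>M. [:-w1 y, 1:])) (card V)) = 0"
      by (rule sum.neutral) (use z in blast)
    then show ?thesis by (subst sum.remove[OF fM e0]) simp
  qed
  also have "\<dots> = 1" using lc[OF fin] by (simp add: sM_def)
  finally show ?thesis .
qed

lemma eta2_nonzero:
  assumes "finite V" "twosets E" "\<forall>e\<in>E. e \<subseteq> V"
  shows "eta2 V E w w1 \<noteq> 0"
  using eta2_coeff[OF assms, of w w1] by auto

definition F :: "'a set set \<Rightarrow> ('a set \<Rightarrow> complex) \<Rightarrow> ('a \<Rightarrow> real) \<Rightarrow> 'a set \<Rightarrow> real poly" where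
  "F E w w1 S = eta2 S (induced_edges E S) w w1"

lemma ind_tw: "twosets E \<Longrightarrow> twosets (induced_edges E S)"
  unfolding twosets_def induced_edges_def by auto

lemma ind_sub: "\<forall>e\<in>induced_edges E S. e \<subseteq> S"
  unfolding induced_edges_def by auto

lemma del_ind: "del_edges (induced_edges E S) u = induced_edges E (S - {u})"
  unfolding del_edges_def induced_edges_def by auto

lemma F_nonzero: "finite S \<Longrightarrow> twosets E \<Longrightarrow> F E w w1 S \<noteq> 0"
  unfolding F_def by (rule eta2_nonzero) (auto simp: ind_tw ind_sub)

lemma F_pderiv: "finite S \<Longrightarrow> pderiv (F E w w1 S) = (\<Sum>z\<in>S. F E w w1 (S - {z}))"
  unfolding F_def by (subst eta2_pderiv) (auto simp: ind_sub del_ind)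

lemma twosets_neq: assumes "twosets E" "{u,z} \<in> E" shows "u \<noteq> z"
proof
  assume "u = z"
  then have "{u} \<in> E" using assms(2) by simp
  then obtain a b where ab: "a \<noteq> b" "{u} = {a,b}" using assms(1) unfolding twosets_def by (meson)
  then have "a \<in> {u}" "b \<in> {u}" by auto
  then show False using ab(1) by simp
qed

lemma F_rec:
  assumes "finite S" "twosets E" "u \<in> S"
  shows "F E w w1 S = [:-w1 u, 1:] * F E w w1 (S - {u})
     - (\<Sum>z\<in>{z\<in>S-{u}. {u,z} \<in> E}. smult ((cmod (w {u,z}))\<^sup>2) (F E w w1 (S - {u} - {z})))"
proof -
  have N: "{z. {u,z} \<in> induced_edges E S} = {z\<in>S-{u}. {u,z} \<in> E}"
    using twosets_neq[OF assms(2)] assms(3) unfolding induced_edges_def by blast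
  show ?thesis unfolding F_def
    unfolding eta2_rec[OF assms(1) ind_tw[OF assms(2)] ind_sub assms(3)] N del_ind ..
qed




lemma dvd_order_le: assumes "p \<noteq> 0" "[:-t,1:]^n dvd p" shows "n \<le> order t p"
proof (rule ccontr)
  assume "\<not> n \<le> order t p"
  then have "[:-t,1:]^Suc (order t p) dvd [:-t,1:]^n" by (intro le_imp_power_dvd) simp
  then have "[:-t,1:]^Suc (order t p) dvd p" using assms(2) dvd_trans by blast
  then show False using order_2[OF assms(1)] by blast
qed

lemma dvd_pderiv_pow: assumes "[:-t,1::real:]^n dvd p" shows "[:-t,1:]^(n-1) dvd pderiv p"
proof (cases n)
  case 0 then show ?thesis by simp
next
  case (Suc k)
  obtain q where q: "p = [:-t,1:]^n * q" using assms by (auto elim: dvdE)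
  have "pderiv p = [:-t,1:]^n * pderiv q + q * pderiv ([:-t,1:]^n)"
    unfolding q by (rule pderiv_mult)
  also have "\<dots> = [:-t,1:]^k * ([:-t,1:] * pderiv q + q * smult (of_nat (Suc k)) 1)"
    unfolding Suc pderiv_power_Suc by (simp add: pderiv_pCons algebra_simps)
  finally show ?thesis using Suc by simp
qed

context
  fixes E :: "'a set set" and w :: "'a set \<Rightarrow> complex" and w1 :: "'a \<Rightarrow> real"
  assumes tw: "twosets E"
begin

abbreviation G where "G \<equiv> F E w w1"

definition D :: "'a set \<Rightarrow> 'a \<Rightarrow> 'a \<Rightarrow> real poly" where
  "D S u v = G (S - {u}) * G (S - {v}) - G S * G (S - {u} - {v})"

abbreviation cw where "cw u z \<equiv> (cmod (w {u,z}))\<^sup>2"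

lemma HL_step:
  assumes S: "finite S" "u \<in> S" "v \<in> S" "u \<noteq> v"
  shows "D S u v = (if {u,v} \<in> E then smult (cw u v) (G (S - {u} - {v})^2) else 0)
     + (\<Sum>i\<in>{z\<in>S-{u}. {u,z} \<in> E} - {v}. smult (cw u i) (D (S - {u}) i v))"
proof -
  define N where "N = {z\<in>S-{u}. {u,z} \<in> E}"
  define L where "L = [:-w1 u, 1:]"
  define A where "A = G (S - {u})"
  define B where "B = G (S - {u} - {v})"
  define s1 where "s1 = (\<Sum>i\<in>N. smult (cw u i) (G (S - {u} - {i})))"
  define s2 where "s2 = (\<Sum>i\<in>N - {v}. smult (cw u i) (G (S - {u} - {i} - {v})))"
  have fN: "finite N" using S(1) N_def by simp
  have R1: "G S = L * A - s1" unfolding L_def A_def s1_def N_def by (rule F_rec[OF S(1) tw S(2)])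
  have N2: "{z\<in>S-{v}-{u}. {u,z} \<in> E} = N - {v}" unfolding N_def by auto
  have e1: "S - {v} - {u} = S - {u} - {v}" by auto
  have e2: "\<And>i. S - {v} - {u} - {i} = S - {u} - {i} - {v}" by auto
  have r: "G (S - {v}) = [:-w1 u, 1:] * G (S - {v} - {u})
     - (\<Sum>z\<in>{z\<in>S-{v}-{u}. {u,z} \<in> E}. smult (cw u z) (G (S - {v} - {u} - {z})))"
    using F_rec[OF _ tw, of "S - {v}" u w w1] S by simp
  have R2: "G (S - {v}) = L * B - s2"
    using r[unfolded N2, unfolded e2, unfolded e1] unfolding L_def B_def s2_def .
  have "D S u v = s1 * B - A * s2"
    unfolding D_def R1 R2 A_def[symmetric] B_def[symmetric] by (simp add: algebra_simps)
  also have "s1 * B = (\<Sum>i\<in>N. smult (cw u i) (G (S - {u} - {i}) * B))"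
    unfolding s1_def sum_distrib_right by (simp add: mult_smult_left)
  also have "A * s2 = (\<Sum>i\<in>N - {v}. smult (cw u i) (A * G (S - {u} - {i} - {v})))"
    unfolding s2_def sum_distrib_left by (simp add: mult_smult_right)
  also have "(\<Sum>i\<in>N. smult (cw u i) (G (S - {u} - {i}) * B)) =
      (if {u,v} \<in> E then smult (cw u v) (B^2) else 0) + (\<Sum>i\<in>N - {v}. smult (cw u i) (G (S - {u} - {i}) * B))"
  proof (cases "{u,v} \<in> E")
    case True
    then have "v \<in> N" using S N_def by auto
    then show ?thesis using True fN B_def by (simp add: sum.remove power2_eq_square)
  next
    case False
    then have "N - {v} = N" using N_def by auto
    then show ?thesis using False by simp
  qed
  finally have "D S u v = (if {u,v} \<in> E then smult (cw u v) (B^2) else 0) +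
     ((\<Sum>i\<in>N - {v}. smult (cw u i) (G (S - {u} - {i}) * B)) - (\<Sum>i\<in>N - {v}. smult (cw u i) (A * G (S - {u} - {i} - {v}))))"
    by simp
  also have "(\<Sum>i\<in>N - {v}. smult (cw u i) (G (S - {u} - {i}) * B)) - (\<Sum>i\<in>N - {v}. smult (cw u i) (A * G (S - {u} - {i} - {v})))
     = (\<Sum>i\<in>N - {v}. smult (cw u i) (D (S - {u}) i v))"
    unfolding sum_subtractf[symmetric] D_def A_def B_def
    by (intro sum.cong refl) (simp add: smult_diff_right)
  finally show ?thesis unfolding B_def N_def .
qed

lemma D_nice:
  assumes "finite S" "u \<in> S" "v \<in> S" "u \<noteq> v"
  shows "nice t (D S u v)"
  using assms
proof (induction "card S" arbitrary: S u v rule: less_induct)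
  case less
  have c: "card (S - {u}) < card S" using less.prems by (meson card_Diff1_less)
  have "nice t (smult (cw u i) (D (S - {u}) i v))" if "i \<in> {z\<in>S-{u}. {u,z} \<in> E} - {v}" for i
    using less.hyps[OF c, of i v] less.prems that by (intro nice_smult) auto
  then have "nice t (\<Sum>i\<in>{z\<in>S-{u}. {u,z} \<in> E} - {v}. smult (cw u i) (D (S - {u}) i v))"
    by (rule nice_sum)
  moreover have "nice t (if {u,v} \<in> E then smult (cw u v) (G (S - {u} - {v})^2) else 0)"
    by (auto intro: nice_smult nice_sq)
  ultimately show ?case unfolding HL_step[OF less.prems] by (rule nice_add[rotated])
qed


lemma interlace_lower:
  assumes S: "finite S" "u \<in> S"
  shows "order t (G S) \<le> order t (G (S - {u})) + 1"
proof -
  define a where "a = order t (G (S - {u}))"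
  define m where "m = order t (G S)"
  define W where "W = G S * pderiv (G (S - {u})) - G (S - {u}) * pderiv (G S)"
  have fS: "finite (S - {u})" using S by simp
  have pd1: "pderiv (G S) = G (S - {u}) + (\<Sum>z\<in>S - {u}. G (S - {z}))"
    unfolding F_pderiv[OF S(1)] using S by (simp add: sum.remove)
  have pd2: "pderiv (G (S - {u})) = (\<Sum>z\<in>S - {u}. G (S - {u} - {z}))"
    using F_pderiv[OF fS] by simp
  have mW: "- W = (\<Sum>z\<in>S - {u}. D S u z) + G (S - {u})^2"
    unfolding W_def pd1 pd2 D_def sum_subtractf sum_distrib_left
    by (simp add: algebra_simps power2_eq_square sum_distrib_left mult.commute)
  have nz: "G (S - {u}) \<noteq> 0" using F_nonzero[OF fS tw] by simp
  have "nice t (\<Sum>z\<in>S - {u}. D S u z)"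
    by (rule nice_sum) (use D_nice S in auto)
  from nice_add_le[OF this nice_sq, of "G (S - {u})"] nz
  have W1: "- W \<noteq> 0" "order t (- W) \<le> order t (G (S - {u})^2)" unfolding mW by auto
  have o2: "order t (G (S - {u})^2) = 2 * a"
    using nz unfolding a_def power2_eq_square by (simp add: order_mult)
  have d1: "[:-t,1:]^m dvd G S" unfolding m_def by (rule order_1)
  have d2: "[:-t,1:]^a dvd G (S - {u})" unfolding a_def by (rule order_1)
  have "[:-t,1:]^(m + (a - 1)) dvd G S * pderiv (G (S - {u}))"
    unfolding power_add by (intro mult_dvd_mono d1 dvd_pderiv_pow d2)
  moreover have "[:-t,1:]^(a + (m - 1)) dvd G (S - {u}) * pderiv (G S)"
    unfolding power_add by (intro mult_dvd_mono d2 dvd_pderiv_pow d1)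
  moreover have "[:-t,1::real:]^(a + m - 1) dvd [:-t,1:]^(m + (a - 1))"
    "[:-t,1::real:]^(a + m - 1) dvd [:-t,1:]^(a + (m - 1))" by (auto intro: le_imp_power_dvd)
  ultimately have "[:-t,1:]^(a + m - 1) dvd W" unfolding W_def
    by (meson dvd_diff dvd_trans)
  then have "[:-t,1:]^(a + m - 1) dvd - W" by simp
  from dvd_order_le[OF W1(1) this] W1(2) o2 have "a + m - 1 \<le> 2 * a" by simp
  then show ?thesis unfolding a_def[symmetric] m_def[symmetric] by linarith
qed

lemma interlace_upper:
  assumes S: "finite S" "u \<in> S"
  shows "order t (G (S - {u})) \<le> order t (G S) + 1"
proof -
  define a where "a = order t (G (S - {u}))"
  have fS: "finite (S - {u})" using S by simp
  have "[:-t,1:]^(a-1) dvd G (S - {u})" unfolding a_def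
    by (rule dvd_trans[OF le_imp_power_dvd order_1]) simp
  moreover have "[:-t,1:]^(a-1) dvd G (S - {u} - {z})" if "z \<in> S - {u}" for z
  proof -
    have "a \<le> order t (G (S - {u} - {z})) + 1" unfolding a_def
      by (rule interlace_lower[OF fS that])
    then show ?thesis by (intro dvd_trans[OF le_imp_power_dvd order_1]) simp
  qed
  ultimately have "[:-t,1:]^(a-1) dvd G S"
    unfolding F_rec[OF S(1) tw S(2)]
    by (intro dvd_diff dvd_mult dvd_sum dvd_smult) auto
  from dvd_order_le[OF F_nonzero[OF S(1) tw] this] show ?thesis unfolding a_def by simp
qed

end



lemma mult_F: "finite S \<Longrightarrow> twosets E \<Longrightarrow> mult t S (induced_edges E S) w w1 = order t (F E w w1 S)"
  unfolding mult_def F_def by (subst eta_eq) (auto simp: ind_tw ind_sub)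

theorem lemma5p1:
  fixes V :: "'a set" and E :: "'a set set" and w :: "'a set \<Rightarrow> complex"
    and w1 :: "'a \<Rightarrow> real" and \<theta> :: real and u :: 'a
  assumes "simple_graph V E"
    and "\<forall>e\<in>E. w e \<noteq> 0"
    and "u \<in> V"
    and "special \<theta> V E w w1 u"
  shows "positive \<theta> V E w w1 u"
proof -
  have fin: "finite V" using assms(1) unfolding simple_graph_def by blast
  have tw: "twosets E" unfolding twosets_def
  proof
    fix e assume "e \<in> E"
    then obtain a b where "a \<noteq> b" "e = {a,b}" using assms(1) unfolding simple_graph_def by meson
    then show "\<exists>a b. a \<noteq> b \<and> e = {a,b}" by blast
  qed
  have sub: "\<forall>e\<in>E. e \<subseteq> V"
  proof
    fix e assume "e \<in> E"
    then obtain a b where "a \<in> V" "b \<in> V" "e = {a,b}" using assms(1) unfolding simple_graph_def by meson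
    then show "e \<subseteq> V" by blast
  qed
  have iV: "induced_edges E V = E" using sub unfolding induced_edges_def by auto
  have dV: "\<And>x. del_edges E x = induced_edges E (V - {x})"
    using sub unfolding induced_edges_def del_edges_def by auto
  define G where "G = F E w w1"
  have mV: "mult \<theta> V E w w1 = order \<theta> (G V)" using mult_F[OF fin tw, of \<theta> w w1] iV G_def by simp
  have mD: "\<And>x. mult \<theta> (V - {x}) (del_edges E x) w w1 = order \<theta> (G (V - {x}))"
    unfolding dV G_def by (rule mult_F) (use fin tw in auto)
  obtain v where uv: "{u,v} \<in> E" and ess_v: "essential \<theta> V E w w1 v" and ness_u: "\<not> essential \<theta> V E w w1 u"
    using assms(4) unfolding special_def by blast
  have vV: "v \<in> V" using ess_v unfolding essential_def by blast
  have neq: "u \<noteq> v" using twosets_neq[OF tw uv] .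
  define m where "m = order \<theta> (G V)"
  define a where "a = order \<theta> (G (V - {u}))"
  define b where "b = order \<theta> (G (V - {v}))"
  have hb: "int b = int m - 1" using ess_v unfolding essential_def mV mD m_def b_def by simp
  then have m1: "m \<ge> 1" "b = m - 1" by auto
  have ha: "int a \<noteq> int m - 1" using ness_u assms(3) unfolding essential_def mV mD m_def a_def by simp
  have lo: "m \<le> a + 1" unfolding m_def a_def G_def by (rule interlace_lower[OF tw fin assms(3)])
  have up: "a \<le> m + 1" unfolding m_def a_def G_def by (rule interlace_upper[OF tw fin assms(3)])
  have "a = m + 1"
  proof (rule ccontr)
    assume "a \<noteq> m + 1"
    with lo up ha have am: "a = m" by linarith
    define q where "q = G (V - {u} - {v})"
    define c where "c = order \<theta> q"
    define T1 where "T1 = G (V - {u}) * G (V - {v})"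
    define T2 where "T2 = G V * q"
    have nzV: "\<And>S. finite S \<Longrightarrow> G S \<noteq> 0" unfolding G_def using F_nonzero tw by blast
    have q0: "q \<noteq> 0" unfolding q_def using nzV fin by simp
    have Ddef: "D E w w1 V u v = T1 - T2" using D_def[OF tw] by (simp add: T1_def T2_def q_def G_def)
    have cpos: "(cmod (w {u,v}))\<^sup>2 > 0" using assms(2) uv by simp
    define P where "P = smult ((cmod (w {u,v}))\<^sup>2) (q^2)"
    define Sg where "Sg = (\<Sum>i\<in>{z\<in>V-{u}. {u,z} \<in> E} - {v}. smult ((cmod (w {u,i}))\<^sup>2) (D E w w1 (V - {u}) i v))"
    have HL: "T1 - T2 = Sg + P"
      using HL_step[OF tw fin assms(3) vV neq, of w w1] uv unfolding Ddef[symmetric] Sg_def P_def q_def G_def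
      by (simp add: add.commute)
    have nSg: "nice \<theta> Sg" unfolding Sg_def
      by (rule nice_sum, rule nice_smult) (use D_nice[OF tw] fin vV neq in auto)
    have nP: "nice \<theta> P" "P \<noteq> 0" unfolding P_def using cpos q0 by (auto intro: nice_smult nice_sq)
    from nice_add_le[OF nSg nP]
    have D0: "T1 - T2 \<noteq> 0" and Dle: "order \<theta> (T1 - T2) \<le> order \<theta> P" unfolding HL by auto
    have oP: "order \<theta> P = 2 * c" unfolding P_def c_def
      using order_smult[of "(cmod (w {u,v}))\<^sup>2" \<theta> "q^2"] cpos q0
      using assms(2) uv by (auto simp: power2_eq_square order_mult mult_2)
    have ev: "even (order \<theta> (T1 - T2))"
      using nice_order_even[OF D_nice[OF tw fin assms(3) vV neq, of \<theta> w w1]] D0 unfolding Ddef by blast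
    have oT1: "order \<theta> T1 = 2 * m - 1" unfolding T1_def
      using nzV fin m1 am by (simp add: order_mult a_def[symmetric] b_def[symmetric])
    have dT1: "\<And>k. k \<le> 2 * m - 1 \<Longrightarrow> [:-\<theta>,1:]^k dvd T1"
      using oT1 le_imp_power_dvd[of _ "order \<theta> T1" "[:-\<theta>,1:]"] order_1[of \<theta> T1] dvd_trans by metis
    have dT2: "[:-\<theta>,1:]^(m + c) dvd T2" unfolding T2_def power_add m_def c_def by (intro mult_dvd_mono order_1)
    show False
    proof (cases "c \<le> m - 1")
      case True
      then have "[:-\<theta>,1:]^(m + c) dvd T1" using dT1 m1 by simp
      with dT2 have "[:-\<theta>,1:]^(m + c) dvd T1 - T2" by (rule dvd_diff[rotated])
      from dvd_order_le[OF D0 this] Dle oP True m1 show False by linarith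
    next
      case False
      then have "2*m \<le> m + c" using m1 by linarith
      then have d2m: "[:-\<theta>,1:]^(2*m) dvd T2" using dT2 le_imp_power_dvd dvd_trans by blast
      have "[:-\<theta>,1:]^(2*m-1) dvd T1 - T2"
        by (rule dvd_diff[OF dT1]) (use dvd_trans[OF le_imp_power_dvd d2m, of "2*m-1"] in auto)
      from dvd_order_le[OF D0 this] have ge: "2*m-1 \<le> order \<theta> (T1 - T2)" .
      have "order \<theta> (T1 - T2) \<noteq> 2 * m - 1" using ev m1 by presburger
      with ge have "2*m \<le> order \<theta> (T1 - T2)" by linarith
      then have "[:-\<theta>,1:]^(2*m) dvd T1 - T2" using le_imp_power_dvd[of _ "order \<theta> (T1-T2)" "[:-\<theta>,1:]"] order_1[of \<theta> "T1-T2"] dvd_trans by metis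
      with d2m have "[:-\<theta>,1:]^(2*m) dvd (T1 - T2) + T2" by (intro dvd_add)
      then have "[:-\<theta>,1:]^(2*m) dvd T1" by simp
      from dvd_order_le[OF _ this] oT1 nzV fin m1 show False unfolding T1_def by simp
    qed
  qed
  then show ?thesis unfolding positive_def mV mD using assms(3) a_def m_def by simp
qed


end
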